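(* Let $\Sigma$ be a signature and consider judgements in $\mathcal{J}(\Sigma)$. Let $\Delta = y_1:B_1,\ldots,y_n:B_n$ be a context. (a) If $(a:A\ (\Delta))\in\mathcal{J}(\Sigma)$ and $(a:A'\ (\Delta))\in\mathcal{J}(\Sigma)$, then $A\equiv A'$. (b) If $(a_1,\ldots,a_n):\Gamma\to\Delta$ and $(b_1,\ldots,b_n):\Gamma\to\Delta$ are context maps in $\mathcal{J}(\Sigma)$ such that $a_i\equiv b_i$ for every $i$ with $y_i\in \mathrm{TV}(\Delta)$, then $a_i\equiv b_i$ for all $i=1,\ldots,n$.
   Context: Fix an infinite set $V$ of variables with decidable equality, and a fresh variable provider: functions $\varphi,\mathsf{fr}$ assigning to each finite $X\subseteq V$ an inhabited subset $\varphi(X)\subseteq V\setminus X$ and an element $\mathsf{fr}(X)\in\varphi(X)$. Fix disjoint sets $F$ (function symbols) and $T$ (type symbols) with decidable equality. Preelements are terms built from variables and symbols of $F$; a pretype is $S(t_1,\ldots,t_n)$ with $S\in T$ and $t_i$ preelements. $\mathrm{V}(E)$ is the set of variables of an expression $E$, $\equiv$ is syntactic identity, and $E[\bar a/\bar x]$ is simultaneous substitution. A precontext is a sequence $\Gamma=x_1:A_1,\ldots,x_n:A_n$ of pretypes with $x_k\in\varphi(\{x_1,\ldots,x_{k-1}\})$ and $\mathrm{V}(A_k)\subseteq\{x_1,\ldots,x_{k-1}\}$; $\mathrm{OV}(\Gamma)=x_1,\ldots,x_n$, $\mathrm{V}(\Gamma)=\{x_1,\ldots,x_n\}$, $\mathrm{Fresh}(\Gamma)=\varphi(\mathrm{V}(\Gamma))$,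 $\mathrm{fresh}(\Gamma)=\mathsf{fr}(\mathrm{V}(\Gamma))$, $E[\bar a/\Gamma]=E[\bar a/x_1,\ldots,x_n]$. Top variables: $\mathrm{TV}(\langle\rangle)=\emptyset$, $\mathrm{TV}(\Gamma,x:A)=(\mathrm{TV}(\Gamma)\setminus\mathrm{V}(A))\cup\{x\}$. A determining sequence for $\Gamma$ is a strictly increasing $\bar i=i_1,\ldots,i_k$ in $\{1,\ldots,n\}$ with $\mathrm{TV}(\Gamma)\subseteq\{x_{i_1},\ldots,x_{i_k}\}$; for $\bar a=a_1,\ldots,a_n$ put $\bar a_{\bar i}=a_{i_1},\ldots,a_{i_k}$. A type predeclaration is $(\Gamma,S,\bar i)$ with $S\in T$, $\bar i$ determining; a function predeclaration is $(\Gamma,f,\bar i,U)$ with $f\in F$, $\bar i$ determining, $U$ a pretype with $\mathrm{V}(U)\subseteq\mathrm{V}(\Gamma)$. A presignature is a set $\Sigma$ of predeclarations with no symbol declared twice. Judgements are "$\Gamma$ context", "$A$ type $(\Gamma)$", "$a:A\ (\Gamma)$". $\mathcal{J}(\Sigma)$ is the smallest set of judgements closed under: (R1) $\langle\rangle$ context; (R2) from $\Gamma$ context and $A$ type $(\Gamma)$ infer $\Gamma,x:A$ context, for $x\in\mathrm{Fresh}(\Gamma)$; (R3) from $x_1:A_1,\ldots,x_n:A_n$ context infer $x_i:A_i\ (x_1:A_1,\ldots,x_n:A_n)$; (R4) if $(\Gamma,S,\bar i)\in\Sigma$ and $\bar a:\Delta\to\Gamma$, infer $S(\bar a_{\bar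 i})$ type $(\Delta)$; (R5) if $(\Gamma,f,\bar i,U)\in\Sigma$, $\bar a:\Delta\to\Gamma$ and $U[\bar a/\Gamma]$ type $(\Delta)$, infer $f(\bar a_{\bar i}):U[\bar a/\Gamma]\ (\Delta)$. Here, for $\Gamma=x_1:A_1,\ldots,x_n:A_n$, the context map "$\bar a:\Delta\to\Gamma$" abbreviates the $n+2$ judgements $\Delta$ context, $\Gamma$ context, and $a_k:A_k[a_1,\ldots,a_{k-1}/x_1,\ldots,x_{k-1}]\ (\Delta)$ for $k=1,\ldots,n$. $\Sigma$ is a signature if ($\Gamma$ context)$\in\mathcal{J}(\Sigma)$ whenever $(\Gamma,S,\bar i)\in\Sigma$, and ($U$ type $(\Gamma)$)$\in\mathcal{J}(\Sigma)$ whenever $(\Gamma,f,\bar i,U)\in\Sigma$. *)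

theory Defs
  imports Main
begin

text \<open>Variables have type 'v, function symbols type 'f, type symbols type 't
  (so F and T are disjoint by construction; equality is decidable in HOL).\<close>

datatype ('v, 'f) pre = Var 'v | App 'f "('v, 'f) pre list"

datatype ('v, 'f, 't) pretype = TApp 't "('v, 'f) pre list"

fun varsP :: "('v, 'f) pre \<Rightarrow> 'v set" where
  "varsP (Var x) = {x}"
| "varsP (App f ts) = \<Union> (set (map varsP ts))"

fun varsT :: "('v, 'f, 't) pretype \<Rightarrow> 'v set" where
  "varsT (TApp S ts) = \<Union> (set (map varsP ts))"

fun substP :: "('v \<Rightarrow> ('v, 'f) pre) \<Rightarrow> ('v, 'f) pre \<Rightarrow> ('v, 'f) pre" where
  "substP \<sigma> (Var x) = \<sigma> x"
| "substP \<sigma> (App f ts) = App f (map (substP \<sigma>) ts)"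

fun substT :: "('v \<Rightarrow> ('v, 'f) pre) \<Rightarrow> ('v, 'f, 't) pretype \<Rightarrow> ('v, 'f, 't) pretype" where
  "substT \<sigma> (TApp S ts) = TApp S (map (substP \<sigma>) ts)"

text \<open>Simultaneous substitution E[a1..an / x1..xn] (the variables x_i are distinct in
  all uses below; if not, the first occurrence wins).\<close>
definition sb :: "'v list \<Rightarrow> ('v, 'f) pre list \<Rightarrow> 'v \<Rightarrow> ('v, 'f) pre" where
  "sb xs as v = (case map_of (zip xs as) v of Some a \<Rightarrow> a | None \<Rightarrow> Var v)"

definition substTL :: "'v list \<Rightarrow> ('v, 'f) pre list \<Rightarrow> ('v, 'f, 't) pretype \<Rightarrow> ('v, 'f, 't) pretype" where
  "substTL xs as A = substT (sb xs as) A"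

type_synonym ('v, 'f, 't) ctx = "('v \<times> ('v, 'f, 't) pretype) list"

definition OV :: "('v, 'f, 't) ctx \<Rightarrow> 'v list" where
  "OV \<Gamma> = map fst \<Gamma>"

definition VC :: "('v, 'f, 't) ctx \<Rightarrow> 'v set" where
  "VC \<Gamma> = set (map fst \<Gamma>)"

definition precontext :: "('v set \<Rightarrow> 'v set) \<Rightarrow> ('v, 'f, 't) ctx \<Rightarrow> bool" where
  "precontext \<phi> \<Gamma> \<longleftrightarrow> (\<forall>k < length \<Gamma>.
      fst (\<Gamma> ! k) \<in> \<phi> (set (take k (OV \<Gamma>))) \<and>
      varsT (snd (\<Gamma> ! k)) \<subseteq> set (take k (OV \<Gamma>)))"

fun TVrev :: "('v \<times> ('v, 'f, 't) pretype) list \<Rightarrow> 'v set" where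
  "TVrev [] = {}"
| "TVrev ((x, A) # G) = (TVrev G - varsT A) \<union> {x}"

definition TV :: "('v, 'f, 't) ctx \<Rightarrow> 'v set" where
  "TV \<Gamma> = TVrev (rev \<Gamma>)"

text \<open>Determining sequences use the paper's 1-based indices i in {1..n}.\<close>
definition determining :: "('v, 'f, 't) ctx \<Rightarrow> nat list \<Rightarrow> bool" where
  "determining \<Gamma> is \<longleftrightarrow> sorted_wrt (<) is \<and> set is \<subseteq> {1..length \<Gamma>} \<and>
     TV \<Gamma> \<subseteq> (\<lambda>i. fst (\<Gamma> ! (i - 1))) ` set is"

definition sel :: "nat list \<Rightarrow> 'a list \<Rightarrow> 'a list" where
  "sel is as = map (\<lambda>i. as ! (i - 1)) is"

datatype ('v, 'f, 't) decl =
    TDecl "('v, 'f, 't) ctx" 't "nat list"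
  | FDecl "('v, 'f, 't) ctx" 'f "nat list" "('v, 'f, 't) pretype"

fun decl_sym :: "('v, 'f, 't) decl \<Rightarrow> 't + 'f" where
  "decl_sym (TDecl _ S _) = Inl S"
| "decl_sym (FDecl _ f _ _) = Inr f"

fun predecl :: "('v set \<Rightarrow> 'v set) \<Rightarrow> ('v, 'f, 't) decl \<Rightarrow> bool" where
  "predecl \<phi> (TDecl \<Gamma> S is) \<longleftrightarrow> precontext \<phi> \<Gamma> \<and> determining \<Gamma> is"
| "predecl \<phi> (FDecl \<Gamma> f is U) \<longleftrightarrow> precontext \<phi> \<Gamma> \<and> determining \<Gamma> is \<and> varsT U \<subseteq> VC \<Gamma>"

definition presignature :: "('v set \<Rightarrow> 'v set) \<Rightarrow> ('v, 'f, 't) decl set \<Rightarrow> bool" where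
  "presignature \<phi> \<Sigma> \<longleftrightarrow> (\<forall>d \<in> \<Sigma>. predecl \<phi> d) \<and>
     (\<forall>d1 \<in> \<Sigma>. \<forall>d2 \<in> \<Sigma>. decl_sym d1 = decl_sym d2 \<longrightarrow> d1 = d2)"

datatype ('v, 'f, 't) judg =
    Ctx "('v, 'f, 't) ctx"
  | Ty "('v, 'f, 't) ctx" "('v, 'f, 't) pretype"
  | El "('v, 'f, 't) ctx" "('v, 'f) pre" "('v, 'f, 't) pretype"

text \<open>The n+2 judgements abbreviated by the context map  as : Delta -> Gamma.\<close>
definition cmap :: "('v, 'f, 't) judg set \<Rightarrow> ('v, 'f) pre list \<Rightarrow> ('v, 'f, 't) ctx \<Rightarrow> ('v, 'f, 't) ctx \<Rightarrow> bool" where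
  "cmap J as \<Delta> \<Gamma> \<longleftrightarrow> Ctx \<Delta> \<in> J \<and> Ctx \<Gamma> \<in> J \<and> length as = length \<Gamma> \<and>
     (\<forall>k < length \<Gamma>. El \<Delta> (as ! k) (substTL (take k (OV \<Gamma>)) (take k as) (snd (\<Gamma> ! k))) \<in> J)"

inductive_set J :: "('v set \<Rightarrow> 'v set) \<Rightarrow> ('v, 'f, 't) decl set \<Rightarrow> ('v, 'f, 't) judg set"
  for \<phi> :: "'v set \<Rightarrow> 'v set" and \<Sigma> :: "('v, 'f, 't) decl set" where
  R1: "Ctx [] \<in> J \<phi> \<Sigma>"
| R2: "\<lbrakk> Ctx \<Gamma> \<in> J \<phi> \<Sigma>; Ty \<Gamma> A \<in> J \<phi> \<Sigma>; x \<in> \<phi> (VC \<Gamma>) \<rbrakk> \<Longrightarrow> Ctx (\<Gamma> @ [(x, A)]) \<in> J \<phi> \<Sigma>"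
| R3: "\<lbrakk> Ctx \<Gamma> \<in> J \<phi> \<Sigma>; i < length \<Gamma> \<rbrakk> \<Longrightarrow> El \<Gamma> (Var (fst (\<Gamma> ! i))) (snd (\<Gamma> ! i)) \<in> J \<phi> \<Sigma>"
| R4: "\<lbrakk> TDecl \<Gamma> S is \<in> \<Sigma>; Ctx \<Delta> \<in> J \<phi> \<Sigma>; Ctx \<Gamma> \<in> J \<phi> \<Sigma>; length as = length \<Gamma>;
        \<forall>k < length \<Gamma>. El \<Delta> (as ! k) (substTL (take k (OV \<Gamma>)) (take k as) (snd (\<Gamma> ! k))) \<in> J \<phi> \<Sigma> \<rbrakk>
       \<Longrightarrow> Ty \<Delta> (TApp S (sel is as)) \<in> J \<phi> \<Sigma>"
| R5: "\<lbrakk> FDecl \<Gamma> f is U \<in> \<Sigma>; Ctx \<Delta> \<in> J \<phi> \<Sigma>; Ctx \<Gamma> \<in> J \<phi> \<Sigma>; length as = length \<Gamma>;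
        \<forall>k < length \<Gamma>. El \<Delta> (as ! k) (substTL (take k (OV \<Gamma>)) (take k as) (snd (\<Gamma> ! k))) \<in> J \<phi> \<Sigma>;
        Ty \<Delta> (substTL (OV \<Gamma>) as U) \<in> J \<phi> \<Sigma> \<rbrakk>
       \<Longrightarrow> El \<Delta> (App f (sel is as)) (substTL (OV \<Gamma>) as U) \<in> J \<phi> \<Sigma>"

lemma R4_R5_are_cmap:
  "cmap (J \<phi> \<Sigma>) as \<Delta> \<Gamma> \<longleftrightarrow> Ctx \<Delta> \<in> J \<phi> \<Sigma> \<and> Ctx \<Gamma> \<in> J \<phi> \<Sigma> \<and> length as = length \<Gamma> \<and>
     (\<forall>k < length \<Gamma>. El \<Delta> (as ! k) (substTL (take k (OV \<Gamma>)) (take k as) (snd (\<Gamma> ! k))) \<in> J \<phi> \<Sigma>)"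
  by (simp add: cmap_def)

definition signature :: "('v set \<Rightarrow> 'v set) \<Rightarrow> ('v, 'f, 't) decl set \<Rightarrow> bool" where
  "signature \<phi> \<Sigma> \<longleftrightarrow> presignature \<phi> \<Sigma> \<and>
     (\<forall>\<Gamma> S is. TDecl \<Gamma> S is \<in> \<Sigma> \<longrightarrow> Ctx \<Gamma> \<in> J \<phi> \<Sigma>) \<and>
     (\<forall>\<Gamma> f is U. FDecl \<Gamma> f is U \<in> \<Sigma> \<longrightarrow> Ty \<Gamma> U \<in> J \<phi> \<Sigma>)"

definition fresh_provider :: "('v set \<Rightarrow> 'v set) \<Rightarrow> ('v set \<Rightarrow> 'v) \<Rightarrow> bool" where
  "fresh_provider \<phi> fr \<longleftrightarrow> (\<forall>X. finite X \<longrightarrow> \<phi> X \<subseteq> - X \<and> fr X \<in> \<phi> X)"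

end

theory Submission
  imports Defs
begin

lemma substP_eq_vars: "substP \<sigma> t = substP \<tau> t \<Longrightarrow> x \<in> varsP t \<Longrightarrow> \<sigma> x = \<tau> x"
  by (induction t) auto

lemma substT_eq_vars: "substT \<sigma> B = substT \<tau> B \<Longrightarrow> x \<in> varsT B \<Longrightarrow> \<sigma> x = \<tau> x"
  by (cases B) (auto intro: substP_eq_vars)

lemma sb_nth: "distinct xs \<Longrightarrow> length as = length xs \<Longrightarrow> i < length xs \<Longrightarrow> sb xs as (xs!i) = as!i"
  by (simp add: sb_def map_of_zip_nth)

lemma lemB:
  fixes E :: "('v, 'f) pre \<Rightarrow> ('v, 'f, 't) pretype \<Rightarrow> bool" and \<Delta> :: "('v, 'f, 't) ctx"
  assumes "distinct (OV \<Delta>)"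
    and "\<forall>k<length \<Delta>. varsT (snd (\<Delta>!k)) \<subseteq> set (take k (OV \<Delta>))"
    and "length as = length \<Delta>" and "length bs = length \<Delta>"
    and "\<forall>k<length \<Delta>. \<forall>A'. E (as!k) A' \<longrightarrow> A' = substTL (take k (OV \<Delta>)) (take k as) (snd (\<Delta>!k))"
    and "\<forall>k<length \<Delta>. E (bs!k) (substTL (take k (OV \<Delta>)) (take k bs) (snd (\<Delta>!k)))"
    and "\<forall>i<length \<Delta>. fst (\<Delta>!i) \<in> TV \<Delta> \<longrightarrow> as!i = bs!i"
  shows "\<forall>i<length \<Delta>. as!i = bs!i"
  using assms
proof (induction \<Delta> arbitrary: as bs rule: rev_induct)
  case Nil
  then show ?case by simp
next
  case (snoc p \<Delta>0)
  obtain y B where p: "p = (y, B)" by (cases p)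
  define n where "n = length \<Delta>0"
  have lOV: "length (OV \<Delta>0) = n" by (simp add: OV_def n_def)
  have OVs: "OV (\<Delta>0 @ [p]) = OV \<Delta>0 @ [y]" by (simp add: OV_def p)
  have TVs: "TV (\<Delta>0 @ [p]) = (TV \<Delta>0 - varsT B) \<union> {y}" by (simp add: TV_def p)
  have dist0: "distinct (OV \<Delta>0)" using snoc.prems(1) OVs by auto
  have len: "length as = Suc n" "length bs = Suc n" using snoc.prems n_def by auto
  have tk: "\<And>k. k \<le> n \<Longrightarrow> take k (OV (\<Delta>0 @ [p])) = take k (OV \<Delta>0)"
    using OVs lOV by simp
  have nth0: "\<And>k. k < n \<Longrightarrow> (\<Delta>0 @ [p]) ! k = \<Delta>0 ! k" by (simp add: nth_append n_def)
  have nthn: "(\<Delta>0 @ [p]) ! n = (y, B)" by (simp add: n_def p)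
  have last: "as!n = bs!n" using snoc.prems(7) TVs nthn n_def by auto
  have tyB: "substTL (OV \<Delta>0) (take n bs) B = substTL (OV \<Delta>0) (take n as) B"
  proof -
    have "E (bs!n) (substTL (take n (OV (\<Delta>0@[p]))) (take n bs) (snd ((\<Delta>0@[p])!n)))"
      using snoc.prems(6) n_def by auto
    hence "E (as!n) (substTL (OV \<Delta>0) (take n bs) B)" using last tk[of n] nthn lOV by simp
    thus ?thesis using snoc.prems(5) n_def tk[of n] nthn lOV by fastforce
  qed
  have varsB: "varsT B \<subseteq> set (OV \<Delta>0)" using snoc.prems(2) n_def tk[of n] nthn lOV by fastforce
  have agree: "as!i = bs!i" if "i < n" "fst (\<Delta>0!i) \<in> varsT B" for i
  proof -
    have x: "fst (\<Delta>0!i) = OV \<Delta>0 ! i" using that by (simp add: OV_def n_def)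
    have "sb (OV \<Delta>0) (take n bs) (OV \<Delta>0 ! i) = sb (OV \<Delta>0) (take n as) (OV \<Delta>0 ! i)"
      using substT_eq_vars[OF tyB[unfolded substTL_def]] that x by metis
    moreover have "sb (OV \<Delta>0) (take n bs) (OV \<Delta>0 ! i) = take n bs ! i"
      using sb_nth[OF dist0, of "take n bs" i] len lOV that by simp
    moreover have "sb (OV \<Delta>0) (take n as) (OV \<Delta>0 ! i) = take n as ! i"
      using sb_nth[OF dist0, of "take n as" i] len lOV that by simp
    ultimately have "take n bs ! i = take n as ! i" by simp
    thus ?thesis using that by simp
  qed
  have IH: "\<forall>i<length \<Delta>0. take n as ! i = take n bs ! i"
  proof (rule snoc.IH)
    show "distinct (OV \<Delta>0)" by (rule dist0)
    show "\<forall>k<length \<Delta>0. varsT (snd (\<Delta>0 ! k)) \<subseteq> set (take k (OV \<Delta>0))"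
    proof (intro allI impI)
      fix k assume k: "k < length \<Delta>0"
      have "varsT (snd ((\<Delta>0@[p])!k)) \<subseteq> set (take k (OV (\<Delta>0@[p])))"
        using snoc.prems(2) k by simp
      then show "varsT (snd (\<Delta>0 ! k)) \<subseteq> set (take k (OV \<Delta>0))"
        using tk[of k] nth0[of k] n_def k by simp
    qed
    show "length (take n as) = length \<Delta>0" "length (take n bs) = length \<Delta>0" using len n_def by auto
    show "\<forall>k<length \<Delta>0. \<forall>A'. E (take n as ! k) A' \<longrightarrow> A' = substTL (take k (OV \<Delta>0)) (take k (take n as)) (snd (\<Delta>0 ! k))"
    proof (intro allI impI)
      fix k A' assume k: "k < length \<Delta>0" and e: "E (take n as ! k) A'"
      have "A' = substTL (take k (OV (\<Delta>0@[p]))) (take k as) (snd ((\<Delta>0@[p]) ! k))"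
        using snoc.prems(5) k e n_def by simp
      then show "A' = substTL (take k (OV \<Delta>0)) (take k (take n as)) (snd (\<Delta>0 ! k))"
        using tk[of k] nth0[of k] n_def k by (simp add: min_def)
    qed
    show "\<forall>k<length \<Delta>0. E (take n bs ! k) (substTL (take k (OV \<Delta>0)) (take k (take n bs)) (snd (\<Delta>0 ! k)))"
    proof (intro allI impI)
      fix k assume k: "k < length \<Delta>0"
      have "E (bs ! k) (substTL (take k (OV (\<Delta>0@[p]))) (take k bs) (snd ((\<Delta>0@[p]) ! k)))"
        using snoc.prems(6) k by simp
      then show "E (take n bs ! k) (substTL (take k (OV \<Delta>0)) (take k (take n bs)) (snd (\<Delta>0 ! k)))"
        using tk[of k] nth0[of k] n_def k by (simp add: min_def)
    qed
    show "\<forall>i<length \<Delta>0. fst (\<Delta>0 ! i) \<in> TV \<Delta>0 \<longrightarrow> take n as ! i = take n bs ! i"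
    proof (intro allI impI)
      fix i assume i: "i < length \<Delta>0" and t: "fst (\<Delta>0 ! i) \<in> TV \<Delta>0"
      show "take n as ! i = take n bs ! i"
      proof (cases "fst (\<Delta>0 ! i) \<in> varsT B")
        case True then show ?thesis using agree i n_def by simp
      next
        case False
        then have "fst ((\<Delta>0 @ [p]) ! i) \<in> TV (\<Delta>0 @ [p])" using t TVs nth0 i n_def by auto
        then show ?thesis using snoc.prems(7) i n_def by auto
      qed
    qed
  qed
  show ?case
  proof (intro allI impI)
    fix i assume "i < length (\<Delta>0 @ [p])"
    then have "i < n \<or> i = n" by (simp add: n_def less_Suc_eq)
    then show "as ! i = bs ! i"
    proof
      assume i: "i < n"
      then have "take n as ! i = take n bs ! i" using IH n_def by simp
      then show ?thesis using i by simp
    next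
      assume "i = n" then show ?thesis using last by simp
    qed
  qed
qed


lemma finite_VC: "finite (VC \<Gamma>)" by (simp add: VC_def)

lemma wf_J:
  assumes fp: "fresh_provider \<phi> fr" and ps: "presignature \<phi> \<Sigma>"
  shows "j \<in> J \<phi> \<Sigma> \<Longrightarrow> (case j of
      Ctx \<Gamma> \<Rightarrow> distinct (OV \<Gamma>) \<and> (\<forall>k<length \<Gamma>. varsT (snd (\<Gamma>!k)) \<subseteq> set (take k (OV \<Gamma>)))
    | Ty \<Gamma> A \<Rightarrow> varsT A \<subseteq> VC \<Gamma>
    | El \<Gamma> a A \<Rightarrow> varsP a \<subseteq> VC \<Gamma>)"
proof (induction j rule: J.induct)
  case R1
  then show ?case by (simp add: OV_def)
next
  case (R2 \<Gamma> A x)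
  have "\<phi> (VC \<Gamma>) \<subseteq> - VC \<Gamma>" using fp finite_VC[of \<Gamma>] unfolding fresh_provider_def by simp
  then have xn: "x \<notin> VC \<Gamma>" using \<open>x \<in> \<phi> (VC \<Gamma>)\<close> by blast
  have IH1: "distinct (OV \<Gamma>)" "\<forall>k<length \<Gamma>. varsT (snd (\<Gamma>!k)) \<subseteq> set (take k (OV \<Gamma>))"
    using R2.IH(1) by simp_all
  have IH2: "varsT A \<subseteq> VC \<Gamma>" using R2.IH(2) by simp
  have d: "distinct (OV (\<Gamma> @ [(x, A)]))" using IH1 xn by (simp add: OV_def VC_def)
  have v: "varsT (snd ((\<Gamma> @ [(x, A)])!k)) \<subseteq> set (take k (OV (\<Gamma> @ [(x, A)])))"
    if k: "k < length (\<Gamma> @ [(x, A)])" for k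
  proof (cases "k < length \<Gamma>")
    case True
    then show ?thesis using IH1 by (simp add: nth_append OV_def)
  next
    case False
    then have "k = length \<Gamma>" using k by simp
    then show ?thesis using IH2 by (simp add: OV_def VC_def)
  qed
  show ?case using d v by simp
next
  case (R3 \<Gamma> i)
  then show ?case by (simp add: VC_def)
next
  case (R4 \<Gamma> S "is" \<Delta> as)
  have "predecl \<phi> (TDecl \<Gamma> S is)" using ps \<open>TDecl \<Gamma> S is \<in> \<Sigma>\<close> unfolding presignature_def by blast
  then have "set is \<subseteq> {1..length \<Gamma>}" by (simp add: determining_def)
  moreover have "\<forall>k<length \<Gamma>. varsP (as!k) \<subseteq> VC \<Delta>" using R4 by auto
  ultimately have "\<forall>i\<in>set is. varsP (as!(i-1)) \<subseteq> VC \<Delta>"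
  proof (intro ballI)
    fix i assume s: "set is \<subseteq> {1..length \<Gamma>}" and a: "\<forall>k<length \<Gamma>. varsP (as!k) \<subseteq> VC \<Delta>"
      and i: "i \<in> set is"
    have "i - 1 < length \<Gamma>" using s i by fastforce
    then show "varsP (as!(i-1)) \<subseteq> VC \<Delta>" using a by blast
  qed
  then show ?case by (auto simp: sel_def)
next
  case (R5 \<Gamma> f "is" U \<Delta> as)
  have "predecl \<phi> (FDecl \<Gamma> f is U)" using ps \<open>FDecl \<Gamma> f is U \<in> \<Sigma>\<close> unfolding presignature_def by blast
  then have "set is \<subseteq> {1..length \<Gamma>}" by (simp add: determining_def)
  moreover have "\<forall>k<length \<Gamma>. varsP (as!k) \<subseteq> VC \<Delta>" using R5 by auto
  ultimately have "\<forall>i\<in>set is. varsP (as!(i-1)) \<subseteq> VC \<Delta>"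
  proof (intro ballI)
    fix i assume s: "set is \<subseteq> {1..length \<Gamma>}" and a: "\<forall>k<length \<Gamma>. varsP (as!k) \<subseteq> VC \<Delta>"
      and i: "i \<in> set is"
    have "i - 1 < length \<Gamma>" using s i by fastforce
    then show "varsP (as!(i-1)) \<subseteq> VC \<Delta>" using a by blast
  qed
  then show ?case by (auto simp: sel_def)
qed

lemma ctx_wf:
  assumes "fresh_provider \<phi> fr" "presignature \<phi> \<Sigma>" "Ctx \<Gamma> \<in> J \<phi> \<Sigma>"
  shows "distinct (OV \<Gamma>)" "\<forall>k<length \<Gamma>. varsT (snd (\<Gamma>!k)) \<subseteq> set (take k (OV \<Gamma>))"
  using wf_J[OF assms(1,2) assms(3)] by auto

inductive_cases ElE: "El \<Gamma> a A \<in> J \<phi> \<Sigma>"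

lemma uniq_J:
  assumes fp: "fresh_provider \<phi> fr" and ps: "presignature \<phi> \<Sigma>"
  shows "j \<in> J \<phi> \<Sigma> \<Longrightarrow> (case j of El \<Gamma> a A \<Rightarrow> \<forall>A'. El \<Gamma> a A' \<in> J \<phi> \<Sigma> \<longrightarrow> A' = A | _ \<Rightarrow> True)"
proof (induction j rule: J.induct)
  case (R3 \<Gamma> i)
  have d: "distinct (OV \<Gamma>)" using ctx_wf[OF fp ps \<open>Ctx \<Gamma> \<in> J \<phi> \<Sigma>\<close>] by simp
  have "\<forall>A'. El \<Gamma> (Var (fst (\<Gamma> ! i))) A' \<in> J \<phi> \<Sigma> \<longrightarrow> A' = snd (\<Gamma> ! i)"
  proof (intro allI impI)
    fix A' assume "El \<Gamma> (Var (fst (\<Gamma> ! i))) A' \<in> J \<phi> \<Sigma>"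
    then show "A' = snd (\<Gamma> ! i)"
    proof (rule ElE)
      fix j assume h: "Ctx \<Gamma> \<in> J \<phi> \<Sigma>" "j < length \<Gamma>" "Var (fst (\<Gamma> ! i)) = Var (fst (\<Gamma> ! j))"
        "A' = snd (\<Gamma> ! j)"
      then have "OV \<Gamma> ! j = OV \<Gamma> ! i" using \<open>i < length \<Gamma>\<close> by (simp add: OV_def)
      moreover have "length (OV \<Gamma>) = length \<Gamma>" by (simp add: OV_def)
      ultimately have "j = i" using nth_eq_iff_index_eq[OF d, of j i] h(2) \<open>i < length \<Gamma>\<close> by simp
      then show ?thesis using h by simp
    qed simp
  qed
  then show ?case by simp
next
  case (R5 \<Gamma> f "is" U \<Delta> as)
  note R5o = R5
  have d: "distinct (OV \<Gamma>)" and w: "\<forall>k<length \<Gamma>. varsT (snd (\<Gamma>!k)) \<subseteq> set (take k (OV \<Gamma>))"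
    using ctx_wf[OF fp ps \<open>Ctx \<Gamma> \<in> J \<phi> \<Sigma>\<close>] by auto
  have "predecl \<phi> (FDecl \<Gamma> f is U)" using ps \<open>FDecl \<Gamma> f is U \<in> \<Sigma>\<close> unfolding presignature_def by blast
  then have det: "determining \<Gamma> is" by simp
  have "\<forall>A'. El \<Delta> (App f (sel is as)) A' \<in> J \<phi> \<Sigma> \<longrightarrow> A' = substTL (OV \<Gamma>) as U"
  proof (intro allI impI)
    fix A' assume "El \<Delta> (App f (sel is as)) A' \<in> J \<phi> \<Sigma>"
    then show "A' = substTL (OV \<Gamma>) as U"
    proof (rule ElE)
      fix \<Gamma>' f' is' U' as'
      assume h5: "FDecl \<Gamma>' f' is' U' \<in> \<Sigma>" "Ctx \<Delta> \<in> J \<phi> \<Sigma>" "Ctx \<Gamma>' \<in> J \<phi> \<Sigma>"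
        "length as' = length \<Gamma>'"
        "\<forall>k<length \<Gamma>'. El \<Delta> (as' ! k) (substTL (take k (OV \<Gamma>')) (take k as') (snd (\<Gamma>' ! k))) \<in> J \<phi> \<Sigma>"
        "Ty \<Delta> (substTL (OV \<Gamma>') as' U') \<in> J \<phi> \<Sigma>" "App f (sel is as) = App f' (sel is' as')"
        "A' = substTL (OV \<Gamma>') as' U'"
      have "decl_sym (FDecl \<Gamma>' f' is' U') = decl_sym (FDecl \<Gamma> f is U)" using h5(7) by simp
      then have "FDecl \<Gamma>' f' is' U' = FDecl \<Gamma> f is U"
        using ps h5(1) \<open>FDecl \<Gamma> f is U \<in> \<Sigma>\<close> unfolding presignature_def by blast
      then have eqs: "\<Gamma>' = \<Gamma>" "is' = is" "U' = U" by auto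
      have sel: "sel is as' = sel is as" using h5(7) eqs by simp
      have agree: "\<forall>i<length \<Gamma>. as!i = as'!i"
      proof (rule lemB[where E = "\<lambda>a A. El \<Delta> a A \<in> J \<phi> \<Sigma>"])
        show "distinct (OV \<Gamma>)" by (rule d)
        show "\<forall>k<length \<Gamma>. varsT (snd (\<Gamma>!k)) \<subseteq> set (take k (OV \<Gamma>))" by (rule w)
        show "length as = length \<Gamma>" by (rule \<open>length as = length \<Gamma>\<close>)
        show "length as' = length \<Gamma>" using h5 eqs by simp
        show "\<forall>k<length \<Gamma>. \<forall>A'. El \<Delta> (as!k) A' \<in> J \<phi> \<Sigma> \<longrightarrow> A' = substTL (take k (OV \<Gamma>)) (take k as) (snd (\<Gamma>!k))"
          using R5o by simp
        show "\<forall>k<length \<Gamma>. El \<Delta> (as'!k) (substTL (take k (OV \<Gamma>)) (take k as') (snd (\<Gamma>!k))) \<in> J \<phi> \<Sigma>"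
          using h5 eqs by simp
        show "\<forall>i<length \<Gamma>. fst (\<Gamma>!i) \<in> TV \<Gamma> \<longrightarrow> as!i = as'!i"
        proof (intro allI impI)
          fix i assume i: "i < length \<Gamma>" and t: "fst (\<Gamma>!i) \<in> TV \<Gamma>"
          then obtain j where j: "j \<in> set is" "fst (\<Gamma>!i) = fst (\<Gamma>!(j-1))"
            using det unfolding determining_def by blast
          have jr: "1 \<le> j" "j \<le> length \<Gamma>" using det j(1) unfolding determining_def by auto
          have "OV \<Gamma> ! i = OV \<Gamma> ! (j-1)" using j(2) i jr by (simp add: OV_def)
          moreover have "length (OV \<Gamma>) = length \<Gamma>" by (simp add: OV_def)
          ultimately have ij: "i = j - 1" using nth_eq_iff_index_eq[OF d, of i "j - 1"] i jr by simp
          have "map (\<lambda>i. as' ! (i - 1)) is = map (\<lambda>i. as ! (i - 1)) is" using sel by (simp add: sel_def)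
          then have "as' ! (j-1) = as ! (j-1)" using j(1) by (simp add: map_eq_conv)
          then show "as!i = as'!i" using ij by simp
        qed
      qed
      have "as = as'" using agree \<open>length as = length \<Gamma>\<close> h5 eqs by (auto intro: nth_equalityI)
      then show ?thesis using h5 eqs by simp
    qed simp
  qed
  then show ?case by simp
qed simp_all

theorem mainTheorem1:
  fixes \<phi> :: "'v set \<Rightarrow> 'v set" and fr :: "'v set \<Rightarrow> 'v"
    and \<Sigma> :: "('v, 'f, 't) decl set" and \<Delta> :: "('v, 'f, 't) ctx"
  assumes "infinite (UNIV :: 'v set)"
    and "fresh_provider \<phi> fr"
    and "signature \<phi> \<Sigma>"
    and "Ctx \<Delta> \<in> J \<phi> \<Sigma>"
  shows "(\<forall>a A A'. El \<Delta> a A \<in> J \<phi> \<Sigma> \<and> El \<Delta> a A' \<in> J \<phi> \<Sigma> \<longrightarrow> A = A')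
       \<and> (\<forall>\<Gamma> as bs. cmap (J \<phi> \<Sigma>) as \<Gamma> \<Delta> \<and> cmap (J \<phi> \<Sigma>) bs \<Gamma> \<Delta> \<and>
            (\<forall>i < length \<Delta>. fst (\<Delta> ! i) \<in> TV \<Delta> \<longrightarrow> as ! i = bs ! i)
          \<longrightarrow> (\<forall>i < length \<Delta>. as ! i = bs ! i))"
proof -
  have ps: "presignature \<phi> \<Sigma>" using assms(3) unfolding signature_def by simp
  have U: "\<And>\<Gamma> a A A'. El \<Gamma> a A \<in> J \<phi> \<Sigma> \<Longrightarrow> El \<Gamma> a A' \<in> J \<phi> \<Sigma> \<Longrightarrow> A' = A"
  proof -
    fix \<Gamma> a A A' assume "El \<Gamma> a A \<in> J \<phi> \<Sigma>" "El \<Gamma> a A' \<in> J \<phi> \<Sigma>"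
    then show "A' = A" using uniq_J[OF assms(2) ps \<open>El \<Gamma> a A \<in> J \<phi> \<Sigma>\<close>] by simp
  qed
  have B: "\<forall>i < length \<Delta>. as ! i = bs ! i"
    if c1: "cmap (J \<phi> \<Sigma>) as \<Gamma> \<Delta>" and c2: "cmap (J \<phi> \<Sigma>) bs \<Gamma> \<Delta>"
      and t: "\<forall>i < length \<Delta>. fst (\<Delta> ! i) \<in> TV \<Delta> \<longrightarrow> as ! i = bs ! i" for \<Gamma> as bs
  proof (rule lemB[where E = "\<lambda>a A. El \<Gamma> a A \<in> J \<phi> \<Sigma>"])
    show "distinct (OV \<Delta>)" "\<forall>k<length \<Delta>. varsT (snd (\<Delta>!k)) \<subseteq> set (take k (OV \<Delta>))"
      using ctx_wf[OF assms(2) ps assms(4)] by auto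
    show "length as = length \<Delta>" "length bs = length \<Delta>" using c1 c2 by (auto simp: cmap_def)
    show "\<forall>k<length \<Delta>. \<forall>A'. El \<Gamma> (as!k) A' \<in> J \<phi> \<Sigma> \<longrightarrow> A' = substTL (take k (OV \<Delta>)) (take k as) (snd (\<Delta>!k))"
    proof (intro allI impI)
      fix k A' assume k: "k < length \<Delta>" and e: "El \<Gamma> (as!k) A' \<in> J \<phi> \<Sigma>"
      have "El \<Gamma> (as!k) (substTL (take k (OV \<Delta>)) (take k as) (snd (\<Delta>!k))) \<in> J \<phi> \<Sigma>"
        using c1 k unfolding cmap_def by blast
      then show "A' = substTL (take k (OV \<Delta>)) (take k as) (snd (\<Delta>!k))" using U e by blast
    qed
    show "\<forall>k<length \<Delta>. El \<Gamma> (bs!k) (substTL (take k (OV \<Delta>)) (take k bs) (snd (\<Delta>!k))) \<in> J \<phi> \<Sigma>"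
      using c2 unfolding cmap_def by blast
    show "\<forall>i<length \<Delta>. fst (\<Delta>!i) \<in> TV \<Delta> \<longrightarrow> as!i = bs!i" by (rule t)
  qed
  show ?thesis
  proof (intro conjI allI impI)
    fix a A A' assume "El \<Delta> a A \<in> J \<phi> \<Sigma> \<and> El \<Delta> a A' \<in> J \<phi> \<Sigma>"
    then show "A = A'" using U by blast
  next
    fix \<Gamma> as bs i
    assume h: "cmap (J \<phi> \<Sigma>) as \<Gamma> \<Delta> \<and> cmap (J \<phi> \<Sigma>) bs \<Gamma> \<Delta> \<and>
            (\<forall>i < length \<Delta>. fst (\<Delta> ! i) \<in> TV \<Delta> \<longrightarrow> as ! i = bs ! i)" and i: "i < length \<Delta>"
    show "as ! i = bs ! i" using B[of as \<Gamma> bs] h i by blast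
  qed
qed

end
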